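(* Consider the closed-loop system described in the context, with the leader robot's stiffness $K_1$ symmetric positive definite and the follower's stiffness $K_2=0$. Fix a desired load configuration $(\bar p_L,\bar R_L)\in\mathbb{R}^3\times SO(3)$ and an internal-force value $t\in\mathbb{R}$, and apply the constant forcing input $w=\hat w(\bar p_L,\bar R_L,t)$ computed with the nominal parameters as in the context. Then a configuration $(p_{R_1},p_{R_2},p_L,R_L)$ is an equilibrium configuration of the closed-loop system (i.e. the state with this configuration and all velocities equal to zero has zero accelerations) if and only if all of the following hold: (i) $p_{R_1}=\hat{\bar p}_{R_1}-K_1^{-1}\Delta_m g\,e_3=:p_{R_1}^{eq}$; (ii) $R_L=:R_L^{eq}$ satisfies $[e_1]_\times (R_L^{eq})^\top\Big[\big(b_1 m_L-\tfrac{\hat b_1\hat m_L L}{\hat L}\big)g\,e_3+L\,t\,\bar R_L e_1\Big]=0$; (iii) $f_1=m_L g e_3-\frac{\hat m_L\hat b_1 g}{\hat L}e_3+t\,\bar R_L e_1=:f_1^{eq}$; (iv) $f_2=\frac{\hat b_1\hat m_L g}{\hat L}e_3-t\,\bar R_L e_1=:f_2^{eq}$; (v) $p_L=p_{R_1}^{eq}-R_L^{eq}\,{}^L b_1-\Big(\frac{\|f_1^{eq}\|}{k_1}+l_{01}\Big)\frac{f_1^{eq}}{\|f_1^{eq}\|}$.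
   Context: System: a rigid beam-like load of mass $m_L>0$ and positive-definite inertia $J_L$, with body frame at its center of mass (CoM), position $p_L\in\mathbb{R}^3$, orientation $R_L\in SO(3)$, body angular velocity $\omega$. Gravity $g>0$ acts along $-e_3$, where $e_i$ is the $i$-th canonical basis vector of $\mathbb{R}^3$; $[x]_\times$ denotes the matrix with $[x]_\times y=x\times y$. Two cables are attached at points whose body-frame positions are ${}^L b_1=[b_1,0,0]^\top$ and ${}^L b_2=[-b_2,0,0]^\top$, $b_1,b_2>0$, $L=b_1+b_2$; their world positions are $p_{A_i}=p_L+R_L{}^Lb_i$. Cable $i$ connects $A_i$ to the CoM $p_{R_i}$ of aerial robot $i$; with $l_i=p_{R_i}-p_{A_i}$, the force on the load is $f_i=\|f_i\|\,l_i/\|l_i\|$ with $\|f_i\|=k_i(\|l_i\|-l_{0i})$ if $\|l_i\|>l_{0i}$ and $0$ otherwise ($k_i>0$ stiffness, $l_{0i}$ rest length); the robot receives $-f_i$. Load dynamics: $m_L\ddot p_L=-m_Lg e_3+f_1+f_2$, $J_L\dot\omega=-\omega\times J_L\omega+{}^Lb_1\times R_L^\top f_1+{}^Lb_2\times R_L^\top f_2$. Robots: $\ddot p_{R_i}=u_i$ with admittance control $u_i=M_i^{-1}(-D_i\dot p_{R_i}-K_ip_{R_i}-f_i+w_i)$, $M_i,D_i$ symmetric positive definite, $w_i\in\mathbb{R}^3$ constant forcing inputs; robot 1 is the leader ($K_1$ symmetric positive definite), robot 2 the follower ($K_2=0$). Nominal parameters available to the controller: $\hat m_L,\hat b_1,\hat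 L,\hat k_1,\hat l_{01}$ (with $\hat b_2=\hat L-\hat b_1$); $\Delta_m=m_L-\hat m_L$. Nominal forcing input: $\hat{\bar f}_1=\frac{\hat b_2\hat m_L g}{\hat L}e_3+t\bar R_Le_1$, $\hat{\bar f}_2=\frac{\hat b_1\hat m_L g}{\hat L}e_3-t\bar R_Le_1$, $\hat{\bar p}_{R_1}=\bar p_L+\bar R_L[\hat b_1,0,0]^\top+\big(\frac{\|\hat{\bar f}_1\|}{\hat k_1}+\hat l_{01}\big)\frac{\hat{\bar f}_1}{\|\hat{\bar f}_1\|}$, and $\hat w_1=K_1\hat{\bar p}_{R_1}+\hat{\bar f}_1$, $\hat w_2=\hat{\bar f}_2$. *)

theory Defs
  imports "HOL-Analysis.Analysis"
begin

definition e1 :: "real^3" where "e1 = vector [1, 0, 0]"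
definition e3 :: "real^3" where "e3 = vector [0, 0, 1]"

definition spd :: "real^3^3 \<Rightarrow> bool" where
  "spd A \<longleftrightarrow> transpose A = A \<and> (\<forall>x. x \<noteq> 0 \<longrightarrow> x \<bullet> (A *v x) > 0)"

definition cable_force :: "real \<Rightarrow> real \<Rightarrow> real^3 \<Rightarrow> real^3 \<Rightarrow> real^3" where
  "cable_force k l0 pR pA =
     (let l = pR - pA in
      if norm l > l0 then (k * (norm l - l0)) *\<^sub>R ((1 / norm l) *\<^sub>R l) else 0)"

definition attach1 :: "real \<Rightarrow> real^3" where "attach1 b1 = vector [b1, 0, 0]"
definition attach2 :: "real \<Rightarrow> real^3" where "attach2 b2 = vector [- b2, 0, 0]"

definition closed_loop_acc ::
  "real \<Rightarrow> real^3^3 \<Rightarrow> real \<Rightarrow> real \<Rightarrow> real \<Rightarrow> real \<Rightarrow> real \<Rightarrow> real \<Rightarrow> real \<Rightarrow>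
   real^3^3 \<Rightarrow> real^3^3 \<Rightarrow> real^3^3 \<Rightarrow> real^3^3 \<Rightarrow> real^3^3 \<Rightarrow> real^3^3 \<Rightarrow> real^3 \<Rightarrow> real^3 \<Rightarrow>
   real^3 \<Rightarrow> real^3 \<Rightarrow> real^3 \<Rightarrow> real^3^3 \<Rightarrow> real^3 \<Rightarrow> real^3 \<Rightarrow> real^3 \<Rightarrow> real^3 \<Rightarrow>
   (real^3) \<times> (real^3) \<times> (real^3) \<times> (real^3)" where
  "closed_loop_acc mL JL g b1 b2 k1 l01 k2 l02 M1 D1 K1 M2 D2 K2 w1 w2
      pR1 pR2 pL RL vR1 vR2 vL om =
    (let pA1 = pL + RL *v attach1 b1;
         pA2 = pL + RL *v attach2 b2;
         f1 = cable_force k1 l01 pR1 pA1;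
         f2 = cable_force k2 l02 pR2 pA2
     in (matrix_inv M1 *v (- (D1 *v vR1) - K1 *v pR1 - f1 + w1),
         matrix_inv M2 *v (- (D2 *v vR2) - K2 *v pR2 - f2 + w2),
         (1 / mL) *\<^sub>R (- (mL * g) *\<^sub>R e3 + f1 + f2),
         matrix_inv JL *v (- cross3 om (JL *v om)
                           + cross3 (attach1 b1) (transpose RL *v f1)
                           + cross3 (attach2 b2) (transpose RL *v f2))))"

definition is_equilibrium ::
  "real \<Rightarrow> real^3^3 \<Rightarrow> real \<Rightarrow> real \<Rightarrow> real \<Rightarrow> real \<Rightarrow> real \<Rightarrow> real \<Rightarrow> real \<Rightarrow>
   real^3^3 \<Rightarrow> real^3^3 \<Rightarrow> real^3^3 \<Rightarrow> real^3^3 \<Rightarrow> real^3^3 \<Rightarrow> real^3^3 \<Rightarrow> real^3 \<Rightarrow> real^3 \<Rightarrow>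
   real^3 \<Rightarrow> real^3 \<Rightarrow> real^3 \<Rightarrow> real^3^3 \<Rightarrow> bool" where
  "is_equilibrium mL JL g b1 b2 k1 l01 k2 l02 M1 D1 K1 M2 D2 K2 w1 w2 pR1 pR2 pL RL \<longleftrightarrow>
     closed_loop_acc mL JL g b1 b2 k1 l01 k2 l02 M1 D1 K1 M2 D2 K2 w1 w2
       pR1 pR2 pL RL 0 0 0 0 = (0, 0, 0, 0)"

text \<open>Nominal forcing input (hatted quantities), b2hat = Lhat - b1hat.\<close>
definition fbar1_hat :: "real \<Rightarrow> real \<Rightarrow> real \<Rightarrow> real \<Rightarrow> real^3^3 \<Rightarrow> real \<Rightarrow> real^3" where
  "fbar1_hat mLh b1h Lh g RLbar t =
     (((Lh - b1h) * mLh * g) / Lh) *\<^sub>R e3 + t *\<^sub>R (RLbar *v e1)"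

definition fbar2_hat :: "real \<Rightarrow> real \<Rightarrow> real \<Rightarrow> real \<Rightarrow> real^3^3 \<Rightarrow> real \<Rightarrow> real^3" where
  "fbar2_hat mLh b1h Lh g RLbar t =
     ((b1h * mLh * g) / Lh) *\<^sub>R e3 - t *\<^sub>R (RLbar *v e1)"

definition pbarR1_hat ::
  "real \<Rightarrow> real \<Rightarrow> real \<Rightarrow> real \<Rightarrow> real \<Rightarrow> real \<Rightarrow> real^3 \<Rightarrow> real^3^3 \<Rightarrow> real \<Rightarrow> real^3" where
  "pbarR1_hat mLh b1h Lh k1h l01h g pLbar RLbar t =
     (let f = fbar1_hat mLh b1h Lh g RLbar t in
      pLbar + RLbar *v vector [b1h, 0, 0]
        + (norm f / k1h + l01h) *\<^sub>R ((1 / norm f) *\<^sub>R f))"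

definition w1_hat ::
  "real^3^3 \<Rightarrow> real \<Rightarrow> real \<Rightarrow> real \<Rightarrow> real \<Rightarrow> real \<Rightarrow> real \<Rightarrow> real^3 \<Rightarrow> real^3^3 \<Rightarrow> real \<Rightarrow> real^3" where
  "w1_hat K1 mLh b1h Lh k1h l01h g pLbar RLbar t =
     K1 *v pbarR1_hat mLh b1h Lh k1h l01h g pLbar RLbar t + fbar1_hat mLh b1h Lh g RLbar t"

definition w2_hat :: "real \<Rightarrow> real \<Rightarrow> real \<Rightarrow> real \<Rightarrow> real^3^3 \<Rightarrow> real \<Rightarrow> real^3" where
  "w2_hat mLh b1h Lh g RLbar t = fbar2_hat mLh b1h Lh g RLbar t"

end

theory Submission
  imports Defs
begin

lemma inv_props:
  fixes A :: "real^3^3" assumes "invertible A"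
  shows "A ** matrix_inv A = mat 1 \<and> matrix_inv A ** A = mat 1"
  using assms unfolding invertible_def matrix_inv_def by (rule someI_ex)

lemma spd_inv: "spd A \<Longrightarrow> invertible A"
  unfolding spd_def invertible_left_inverse matrix_left_invertible_ker
  by (metis inner_zero_right less_irrefl)

lemma inv_zero: "spd A \<Longrightarrow> (matrix_inv A *v x = 0) \<longleftrightarrow> x = 0"
proof -
  assume "spd A"
  then have i: "invertible A" by (rule spd_inv)
  have "x = A *v (matrix_inv A *v x)"
    using inv_props[OF i] by (simp add: matrix_vector_mul_assoc)
  then show ?thesis by (metis matrix_vector_mult_0_right)
qed

lemma inv_right: "spd A \<Longrightarrow> A *v (matrix_inv A *v y) = y"
  using inv_props[OF spd_inv] by (simp add: matrix_vector_mul_assoc)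

lemma cable_inv:
  assumes "cable_force k l0 pR pA = f" "f \<noteq> 0" "k > 0" "l0 \<ge> 0"
  shows "pA = pR - (norm f / k + l0) *\<^sub>R ((1 / norm f) *\<^sub>R f)"
proof -
  define l where "l = pR - pA"
  have gt: "norm l > l0" using assms unfolding cable_force_def l_def[symmetric] Let_def
    by (metis)
  then have f: "f = (k * (norm l - l0) / norm l) *\<^sub>R l"
    using assms unfolding cable_force_def l_def[symmetric] Let_def by simp
  have nl: "norm l > 0" using gt assms by linarith
  have c: "k * (norm l - l0) / norm l > 0" using nl gt assms by simp
  have nf: "norm f = k * (norm l - l0)" using f c nl gt assms(3) by simp
  have "(norm f / k + l0) *\<^sub>R ((1 / norm f) *\<^sub>R f) = l"
    using f nf nl gt assms by (simp add: field_simps)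
  then show ?thesis unfolding l_def by simp
qed

lemma cross_dec: "cross3 (attach1 b1) u + cross3 (attach2 b2) v = cross3 e1 (b1 *\<^sub>R u - b2 *\<^sub>R v)"
proof -
  have "attach1 b1 = b1 *\<^sub>R e1" "attach2 b2 = - (b2 *\<^sub>R e1)"
    unfolding attach1_def attach2_def e1_def by (simp_all add: vec_eq_iff vector_def forall_3)
  then show ?thesis by (simp add: cross_mult_left cross_mult_right Cross3.right_diff_distrib)
qed

theorem theorem2:
  fixes mL g b1 b2 k1 l01 k2 l02 mLh b1h Lh k1h l01h t :: real
    and JL M1 D1 K1 M2 D2 K2 RLbar RL :: "real^3^3"
    and pLbar pR1 pR2 pL :: "real^3"
  assumes mL: "mL > 0" and g: "g > 0" and b1: "b1 > 0" and b2: "b2 > 0"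
    and JL: "spd JL" and M1: "spd M1" and D1: "spd D1" and M2: "spd M2" and D2: "spd D2"
    and K1: "spd K1" and K2: "K2 = 0"
    and k1: "k1 > 0" and k2: "k2 > 0" and l01: "l01 \<ge> 0" and l02: "l02 \<ge> 0"
    and mLh: "mLh > 0" and b1h: "b1h > 0" and Lh: "Lh > b1h" and k1h: "k1h > 0" and l01h: "l01h \<ge> 0"
    and RLbar: "rotation_matrix RLbar" and RL: "rotation_matrix RL"
    and f1eq_nz: "(mL * g) *\<^sub>R e3 - (mLh * b1h * g / Lh) *\<^sub>R e3 + t *\<^sub>R (RLbar *v e1) \<noteq> 0"
  shows
    "is_equilibrium mL JL g b1 b2 k1 l01 k2 l02 M1 D1 K1 M2 D2 K2
        (w1_hat K1 mLh b1h Lh k1h l01h g pLbar RLbar t) (w2_hat mLh b1h Lh g RLbar t)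
        pR1 pR2 pL RL
     \<longleftrightarrow>
     (let L = b1 + b2;
          pR1eq = pbarR1_hat mLh b1h Lh k1h l01h g pLbar RLbar t
                  - matrix_inv K1 *v (((mL - mLh) * g) *\<^sub>R e3);
          f1eq = (mL * g) *\<^sub>R e3 - (mLh * b1h * g / Lh) *\<^sub>R e3 + t *\<^sub>R (RLbar *v e1);
          f2eq = (b1h * mLh * g / Lh) *\<^sub>R e3 - t *\<^sub>R (RLbar *v e1)
      in pR1 = pR1eq
       \<and> cross3 e1 (transpose RL *v
            (((b1 * mL - b1h * mLh * L / Lh) * g) *\<^sub>R e3 + (L * t) *\<^sub>R (RLbar *v e1))) = 0
       \<and> cable_force k1 l01 pR1 (pL + RL *v attach1 b1) = f1eq
       \<and> cable_force k2 l02 pR2 (pL + RL *v attach2 b2) = f2eq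
       \<and> pL = pR1eq - RL *v attach1 b1 - (norm f1eq / k1 + l01) *\<^sub>R ((1 / norm f1eq) *\<^sub>R f1eq))"
proof -
  define w1 where "w1 = w1_hat K1 mLh b1h Lh k1h l01h g pLbar RLbar t"
  define w2 where "w2 = w2_hat mLh b1h Lh g RLbar t"
  define f1 where "f1 = cable_force k1 l01 pR1 (pL + RL *v attach1 b1)"
  define f2 where "f2 = cable_force k2 l02 pR2 (pL + RL *v attach2 b2)"
  define pbar where "pbar = pbarR1_hat mLh b1h Lh k1h l01h g pLbar RLbar t"
  define pR1eq where "pR1eq = pbar - matrix_inv K1 *v (((mL - mLh) * g) *\<^sub>R e3)"
  define f1eq where "f1eq = (mL * g) *\<^sub>R e3 - (mLh * b1h * g / Lh) *\<^sub>R e3 + t *\<^sub>R (RLbar *v e1)"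
  define f2eq where "f2eq = (b1h * mLh * g / Lh) *\<^sub>R e3 - t *\<^sub>R (RLbar *v e1)"
  define V where "V = (((b1 * mL - b1h * mLh * (b1 + b2) / Lh) * g) *\<^sub>R e3 + ((b1 + b2) * t) *\<^sub>R (RLbar *v e1))"
  have w2e: "w2 = f2eq" unfolding w2_def w2_hat_def fbar2_hat_def f2eq_def by simp
  have f1f2: "f1eq = (mL * g) *\<^sub>R e3 - f2eq" unfolding f1eq_def f2eq_def
    by (simp add: algebra_simps)
  have sc: "(Lh - b1h) * mLh * g / Lh - mL * g + mLh * b1h * g / Lh = (mLh - mL) * g"
    using Lh b1h by (simp add: field_simps)
  have fb: "fbar1_hat mLh b1h Lh g RLbar t - f1eq = ((mLh - mL) * g) *\<^sub>R e3"
    unfolding fbar1_hat_def f1eq_def sc[symmetric] by (simp add: algebra_simps)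
  have w1e: "w1 = K1 *v pbar + fbar1_hat mLh b1h Lh g RLbar t"
    unfolding w1_def w1_hat_def pbar_def by simp
  have Vf: "b1 *\<^sub>R f1eq - b2 *\<^sub>R f2eq = V"
  proof -
    have "b1 * (mL * g) - b1 * (mLh * b1h * g / Lh) - b2 * (b1h * mLh * g / Lh)
          = (b1 * mL - b1h * mLh * (b1 + b2) / Lh) * g"
      using Lh b1h by (simp add: field_simps)
    then show ?thesis unfolding f1eq_def f2eq_def V_def
      by (simp add: algebra_simps flip: scaleR_add_left scaleR_diff_left)
  qed
  have eq: "is_equilibrium mL JL g b1 b2 k1 l01 k2 l02 M1 D1 K1 M2 D2 K2 w1 w2 pR1 pR2 pL RL
    \<longleftrightarrow> (w1 - K1 *v pR1 - f1 = 0 \<and> w2 - f2 = 0 \<and> - (mL * g) *\<^sub>R e3 + f1 + f2 = 0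
         \<and> cross3 (attach1 b1) (transpose RL *v f1) + cross3 (attach2 b2) (transpose RL *v f2) = 0)"
    unfolding is_equilibrium_def closed_loop_acc_def Let_def f1_def[symmetric] f2_def[symmetric] K2
    using mL
    apply (simp add: inv_zero[OF M1] inv_zero[OF M2] inv_zero[OF JL])
    apply (simp add: algebra_simps)
    done
  show ?thesis
    unfolding w1_def[symmetric] w2_def[symmetric] f1_def[symmetric] f2_def[symmetric] Let_def
      pbar_def[symmetric] pR1eq_def[symmetric] f1eq_def[symmetric] f2eq_def[symmetric] V_def[symmetric] eq
  proof
    assume H: "w1 - K1 *v pR1 - f1 = 0 \<and> w2 - f2 = 0 \<and> - (mL * g) *\<^sub>R e3 + f1 + f2 = 0
         \<and> cross3 (attach1 b1) (transpose RL *v f1) + cross3 (attach2 b2) (transpose RL *v f2) = 0"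
    have f2: "f2 = f2eq" using H w2e by simp
    have h3: "- (mL * g) *\<^sub>R e3 + f1 + f2 = 0" using H by blast
    have "f1 = (- (mL * g) *\<^sub>R e3 + f1 + f2) + (mL * g) *\<^sub>R e3 - f2" by (simp add: algebra_simps)
    also have "\<dots> = (mL * g) *\<^sub>R e3 - f2" unfolding h3 by simp
    finally have f1: "f1 = f1eq" using f2 f1f2 by simp
    have h1: "w1 - K1 *v pR1 - f1 = 0" using H by blast
    have "K1 *v pR1 = w1 - f1 - (w1 - K1 *v pR1 - f1)" by (simp add: algebra_simps)
    also have "\<dots> = w1 - f1" unfolding h1 by simp
    also have "\<dots> = K1 *v pbar + ((mLh - mL) * g) *\<^sub>R e3"
      using f1 w1e fb by (simp add: algebra_simps)
    finally have K: "K1 *v pR1 = K1 *v pbar + ((mLh - mL) * g) *\<^sub>R e3" .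
    have ip: "matrix_inv K1 ** K1 = mat 1" using inv_props[OF spd_inv[OF K1]] by simp
    have "pR1 = matrix_inv K1 *v (K1 *v pR1)" by (simp add: matrix_vector_mul_assoc ip)
    also have "\<dots> = pbar + ((mLh - mL) * g) *\<^sub>R (matrix_inv K1 *v e3)"
      unfolding K by (simp add: matrix_vector_right_distrib matrix_vector_mult_scaleR matrix_vector_mul_assoc ip)
    also have "\<dots> = pR1eq" unfolding pR1eq_def by (simp add: matrix_vector_mult_scaleR algebra_simps)
    finally have p1: "pR1 = pR1eq" .
    have "transpose RL *v V = b1 *\<^sub>R (transpose RL *v f1eq) - b2 *\<^sub>R (transpose RL *v f2eq)"
      unfolding Vf[symmetric] by (simp add: matrix_vector_mult_diff_distrib matrix_vector_mult_scaleR)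
    then have cr: "cross3 e1 (transpose RL *v V) = 0"
      using H f1 f2 cross_dec[of b1 "transpose RL *v f1eq" b2 "transpose RL *v f2eq"] by simp
    have nz: "f1eq \<noteq> 0" using f1eq_nz unfolding f1eq_def .
    have pl: "pL = pR1eq - RL *v attach1 b1 - (norm f1eq / k1 + l01) *\<^sub>R ((1 / norm f1eq) *\<^sub>R f1eq)"
      using cable_inv[OF f1[unfolded f1_def] nz k1 l01] p1 by (simp add: algebra_simps)
    show "pR1 = pR1eq \<and> cross3 e1 (transpose RL *v V) = 0 \<and> f1 = f1eq \<and> f2 = f2eq \<and>
      pL = pR1eq - RL *v attach1 b1 - (norm f1eq / k1 + l01) *\<^sub>R ((1 / norm f1eq) *\<^sub>R f1eq)"
      using p1 cr f1 f2 pl by blast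
  next
    assume H: "pR1 = pR1eq \<and> cross3 e1 (transpose RL *v V) = 0 \<and> f1 = f1eq \<and> f2 = f2eq \<and>
      pL = pR1eq - RL *v attach1 b1 - (norm f1eq / k1 + l01) *\<^sub>R ((1 / norm f1eq) *\<^sub>R f1eq)"
    have K: "K1 *v pR1 = K1 *v pbar - ((mL - mLh) * g) *\<^sub>R e3"
      using H inv_right[OF K1] unfolding pR1eq_def by (simp add: matrix_vector_mult_diff_distrib)
    have fb2: "fbar1_hat mLh b1h Lh g RLbar t = f1eq + ((mLh - mL) * g) *\<^sub>R e3"
      using fb by (simp add: algebra_simps)
    have ff: "f1 = f1eq" using H by blast
    have "w1 - K1 *v pR1 - f1 = (K1 *v pbar + (f1eq + ((mLh - mL) * g) *\<^sub>R e3))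
        - (K1 *v pbar - ((mL - mLh) * g) *\<^sub>R e3) - f1eq" unfolding w1e K fb2 ff ..
    also have "\<dots> = ((mLh - mL) * g + (mL - mLh) * g) *\<^sub>R e3"
      by (simp only: scaleR_add_left) (simp add: algebra_simps)
    also have "\<dots> = 0" by (simp add: algebra_simps)
    finally have e1: "w1 - K1 *v pR1 - f1 = 0" .
    have e2: "w2 - f2 = 0" using H w2e by simp
    have e3: "- (mL * g) *\<^sub>R e3 + f1 + f2 = 0" using H f1f2 by (simp add: algebra_simps)
    have "transpose RL *v V = b1 *\<^sub>R (transpose RL *v f1eq) - b2 *\<^sub>R (transpose RL *v f2eq)"
      unfolding Vf[symmetric] by (simp add: matrix_vector_mult_diff_distrib matrix_vector_mult_scaleR)
    then have e4: "cross3 (attach1 b1) (transpose RL *v f1) + cross3 (attach2 b2) (transpose RL *v f2) = 0"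
      using H cross_dec[of b1 "transpose RL *v f1eq" b2 "transpose RL *v f2eq"] by simp
    show "w1 - K1 *v pR1 - f1 = 0 \<and> w2 - f2 = 0 \<and> - (mL * g) *\<^sub>R e3 + f1 + f2 = 0
         \<and> cross3 (attach1 b1) (transpose RL *v f1) + cross3 (attach2 b2) (transpose RL *v f2) = 0"
      using e1 e2 e3 e4 by blast
  qed
qed

end
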